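(* Let $m\ge1$, $n\ge1$, fix $t_0\in\mathbb{Z}^m$ and let $\mathcal{Z}=\{t\in\mathbb{Z}^m\mid t\ge t_0\}$. Let $T=(T_1,\dots,T_m)\in\mathbb{N}^m$, $T\ne0$. Let $A_\alpha\colon\mathcal{Z}\to\mathcal{M}_n(\mathbb{C})$, $\alpha\in\{1,\dots,m\}$, satisfy $$A_\alpha(t+1_\beta)A_\beta(t)=A_\beta(t+1_\alpha)A_\alpha(t),\quad \forall t\in\mathcal{Z},\ \forall\alpha,\beta,$$ and suppose $A_\alpha(t)$ is invertible for all $\alpha$ and all $t\in\mathcal{Z}$. Let $\Phi(t)=\chi(t,t_0)$, $t\in\mathcal{Z}$. Assume there exist a function $P\colon\mathcal{Z}\to\mathcal{M}_n(\mathbb{C})$ and constant invertible matrices $B_1,\dots,B_m\in\mathcal{M}_n(\mathbb{C})$ such that $P(t+T_\alpha\cdot1_\alpha)=P(t)$ for all $t\in\mathcal{Z}$ and all $\alpha$, $B_\alpha B_\beta=B_\beta B_\alpha$ for all $\alpha,\beta$, and $\Phi(t)=P(t)B_1^{t^1}\cdots B_m^{t^m}$ for all $t\ge t_0$. Consider the recurrences $$x(t+1_\alpha)=A_\alpha(t)x(t),\quad\forall t\ge t_0,\ \forall\alpha\in\{1,\dots,m\},\qquad (1)$$ $$y(t+1_\alpha)=B_\alpha y(t),\quad\forall t\ge t_0,\ \forall\alpha\in\{1,\dots,m\},\qquad (2)$$ for functions $x,y\colon\mathcal{Z}\to\mathbb{C}^n$. Then (each $P(t)$ being invertible) if $y$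 is a solution of (2), then $x(t):=P(t)y(t)$ is a solution of (1); and conversely, if $x$ is a solution of (1), then $y(t):=P(t)^{-1}x(t)$ is a solution of (2).
   Context: $\mathbb{N}=\{0,1,2,\dots\}$; $1_\alpha\in\mathbb{Z}^m$ has $1$ in position $\alpha$ and $0$ elsewhere; $s\le t$ in $\mathbb{Z}^m$ means $s^\alpha\le t^\alpha$ for all $\alpha$; $t=(t^1,\dots,t^m)$. Under the compatibility relations, for each $s\in\mathcal{Z}$ there is a unique $\chi(\cdot,s)\colon\{t\in\mathcal{Z}\mid t\ge s\}\to\mathcal{M}_n(\mathbb{C})$ with $\chi(s,s)=I_n$ and $\chi(t+1_\alpha,s)=A_\alpha(t)\chi(t,s)$ for all $t\ge s$ and all $\alpha$ (the transition matrix). Negative integer powers of invertible matrices are powers of the inverse. *)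

theory Defs
  imports "HOL-Analysis.Analysis"
begin

definition vle :: "int ^ 'm \<Rightarrow> int ^ 'm \<Rightarrow> bool" where
  "vle s t \<longleftrightarrow> (\<forall>i. s $ i \<le> t $ i)"

definition e1 :: "'m \<Rightarrow> int ^ 'm" where
  "e1 \<alpha> = axis \<alpha> 1"

fun matpow :: "complex ^ 'n ^ 'n \<Rightarrow> nat \<Rightarrow> complex ^ 'n ^ 'n" where
  "matpow B 0 = mat 1"
| "matpow B (Suc k) = B ** matpow B k"

definition matipow :: "complex ^ 'n ^ 'n \<Rightarrow> int \<Rightarrow> complex ^ 'n ^ 'n" where
  "matipow B k = (if 0 \<le> k then matpow B (nat k) else matpow (matrix_inv B) (nat (- k)))"

definition Bpow :: "('m \<Rightarrow> complex ^ 'n ^ 'n) \<Rightarrow> int ^ 'm::{finite,linorder} \<Rightarrow> complex ^ 'n ^ 'n" where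
  "Bpow B t = foldr (\<lambda>\<alpha> M. matipow (B \<alpha>) (t $ \<alpha>) ** M) (sorted_list_of_set (UNIV :: 'm set)) (mat 1)"

(* chi(., s) characterized: chi(s,s) = I and chi(t+1_alpha, s) = A_alpha(t) chi(t,s) for t >= s *)
definition is_transition ::
  "('m \<Rightarrow> int ^ 'm \<Rightarrow> complex ^ 'n ^ 'n) \<Rightarrow> int ^ 'm \<Rightarrow> (int ^ 'm \<Rightarrow> complex ^ 'n ^ 'n) \<Rightarrow> bool" where
  "is_transition A s X \<longleftrightarrow> X s = mat 1 \<and>
     (\<forall>t \<alpha>. vle s t \<longrightarrow> X (t + e1 \<alpha>) = A \<alpha> t ** X t)"

definition is_solution ::
  "int ^ 'm \<Rightarrow> ('m \<Rightarrow> int ^ 'm \<Rightarrow> complex ^ 'n ^ 'n) \<Rightarrow> (int ^ 'm \<Rightarrow> complex ^ 'n) \<Rightarrow> bool" where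
  "is_solution t0 A x \<longleftrightarrow> (\<forall>t \<alpha>. vle t0 t \<longrightarrow> x (t + e1 \<alpha>) = A \<alpha> t *v x t)"

end

theory Submission
  imports Defs
begin

lemma minv:
  fixes M :: "'a::field ^'n^'n"
  assumes "invertible M"
  shows "M ** matrix_inv M = mat 1" "matrix_inv M ** M = mat 1"
proof -
  have "\<exists>A'. M ** A' = mat 1 \<and> A' ** M = mat 1" using assms by (simp add: invertible_def)
  hence "M ** matrix_inv M = mat 1 \<and> matrix_inv M ** M = mat 1"
    unfolding matrix_inv_def by (rule someI_ex)
  thus "M ** matrix_inv M = mat 1" "matrix_inv M ** M = mat 1" by auto
qed

lemma inv_invertible:
  fixes M :: "'a::field ^'n^'n"
  assumes "invertible M" shows "invertible (matrix_inv M)"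
  using minv[OF assms] invertible_def by blast

lemma mat1_invertible: "invertible (mat 1 :: 'a::field^'n^'n)"
  unfolding invertible_def by (metis matrix_mul_lid)

lemma comm_mult:
  fixes C X Y :: "'a::field ^'n^'n"
  assumes "C ** X = X ** C" "C ** Y = Y ** C"
  shows "C ** (X ** Y) = (X ** Y) ** C"
  by (metis assms matrix_mul_assoc)

lemma comm_inv:
  fixes C M :: "'a::field ^'n^'n"
  assumes "C ** M = M ** C" "invertible M"
  shows "C ** matrix_inv M = matrix_inv M ** C"
proof -
  have "matrix_inv M ** C = matrix_inv M ** C ** (M ** matrix_inv M)"
    using minv[OF assms(2)] by (simp add: matrix_mul_rid)
  also have "\<dots> = matrix_inv M ** (C ** M) ** matrix_inv M" by (simp add: matrix_mul_assoc)
  also have "\<dots> = (matrix_inv M ** M) ** C ** matrix_inv M" using assms(1) by (simp add: matrix_mul_assoc)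
  also have "\<dots> = C ** matrix_inv M" using minv[OF assms(2)] by (simp add: matrix_mul_lid)
  finally show ?thesis by simp
qed

lemma comm_matpow:
  assumes "C ** M = M ** C"
  shows "C ** matpow M k = matpow M k ** C"
  by (induction k) (simp_all add: matrix_mul_lid matrix_mul_rid comm_mult assms)

lemma comm_matipow:
  assumes "C ** M = M ** C" "invertible M"
  shows "C ** matipow M k = matipow M k ** C"
  proof (cases "0 \<le> k")
  case True thus ?thesis using assms comm_matpow by (simp add: matipow_def)
next
  case False
  have "C ** matrix_inv M = matrix_inv M ** C" using assms comm_inv by blast
  thus ?thesis using False comm_matpow by (simp add: matipow_def)
qed

lemma matpow_invertible:
  assumes "invertible M" shows "invertible (matpow M k)"
  by (induction k) (simp_all add: mat1_invertible invertible_mult assms)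

lemma matipow_invertible:
  assumes "invertible M" shows "invertible (matipow M k)"
  unfolding matipow_def using assms matpow_invertible inv_invertible by auto

lemma matipow_step:
  assumes "invertible M"
  shows "matipow M (k + 1) = M ** matipow M k"
proof (cases "0 \<le> k")
  case True
  hence "nat (k+1) = Suc (nat k)" by simp
  thus ?thesis using True by (simp add: matipow_def)
next
  case False
  hence e: "nat (-k) = Suc (nat (-(k+1)))" by simp
  have "M ** matipow M k = M ** (matrix_inv M ** matpow (matrix_inv M) (nat (-(k+1))))"
    using False by (simp add: matipow_def e)
  also have "\<dots> = matpow (matrix_inv M) (nat (-(k+1)))"
    using minv[OF assms] by (simp add: matrix_mul_assoc matrix_mul_lid)
  also have "\<dots> = matipow M (k+1)"
    using False by (cases "k + 1 = 0") (simp_all add: matipow_def)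
  finally show ?thesis by simp
qed

lemma e1_nth: "e1 \<alpha> $ i = (if i = \<alpha> then 1 else 0)"
  by (simp add: e1_def axis_def)

lemma foldr_comm:
  assumes inv: "\<And>\<alpha>. invertible (B \<alpha>)" and comm: "\<And>\<alpha> \<beta>. B \<alpha> ** B \<beta> = B \<beta> ** B \<alpha>"
    and that: "C = B \<alpha>"
  shows "C ** foldr (\<lambda>\<beta> M. matipow (B \<beta>) (t $ \<beta>) ** M) xs (mat 1)
       = foldr (\<lambda>\<beta> M. matipow (B \<beta>) (t $ \<beta>) ** M) xs (mat 1) ** C"
  using that by (induction xs) (simp_all add: matrix_mul_lid matrix_mul_rid comm_mult comm_matipow inv comm)

lemma foldr_inv:
  assumes inv: "\<And>\<alpha>. invertible (B \<alpha>)"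
  shows "invertible (foldr (\<lambda>\<beta> M. matipow (B \<beta>) (t $ \<beta>) ** M) xs (mat 1))"
  by (induction xs) (simp_all add: mat1_invertible invertible_mult matipow_invertible inv)

lemma foldr_step:
  assumes inv: "\<And>\<alpha>. invertible (B \<alpha>)" and comm: "\<And>\<alpha> \<beta>. B \<alpha> ** B \<beta> = B \<beta> ** B \<alpha>"
  shows "distinct xs \<Longrightarrow> foldr (\<lambda>\<beta> M. matipow (B \<beta>) ((t + e1 \<alpha>) $ \<beta>) ** M) xs (mat 1)
     = (if \<alpha> \<in> set xs then B \<alpha> ** foldr (\<lambda>\<beta> M. matipow (B \<beta>) (t $ \<beta>) ** M) xs (mat 1)
        else foldr (\<lambda>\<beta> M. matipow (B \<beta>) (t $ \<beta>) ** M) xs (mat 1))"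
proof (induction xs)
  case Nil
  then show ?case by simp
next
  case (Cons \<beta> xs)
  show ?case
  proof (cases "\<beta> = \<alpha>")
    case True
    with Cons have "\<alpha> \<notin> set xs" by simp
    with Cons True show ?thesis
      by (simp add: e1_nth matipow_step inv matrix_mul_assoc)
  next
    case False
    have c: "B \<alpha> ** matipow (B \<beta>) (t $ \<beta>) = matipow (B \<beta>) (t $ \<beta>) ** B \<alpha>"
      by (simp add: comm_matipow inv comm)
    from Cons False show ?thesis
      by (simp add: e1_nth matrix_mul_assoc c)
  qed
qed

lemma Bpow_step:
  assumes inv: "\<And>\<alpha>. invertible (B \<alpha>)" and comm: "\<And>\<alpha> \<beta>. B \<alpha> ** B \<beta> = B \<beta> ** B \<alpha>"
  shows "Bpow B (t + e1 \<alpha>) = B \<alpha> ** Bpow B t"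
  unfolding Bpow_def using foldr_step[OF inv comm, where xs="sorted_list_of_set UNIV" and t=t and \<alpha>=\<alpha>] by simp

lemma Bpow_inv:
  assumes inv: "\<And>\<alpha>. invertible (B \<alpha>)"
  shows "invertible (Bpow B t)"
  unfolding Bpow_def by (rule foldr_inv[OF inv])

theorem theorem2p12:
  fixes t0 :: "int ^ ('m::{finite,linorder})"
    and T :: "nat ^ ('m::{finite,linorder})"
    and A :: "('m::{finite,linorder}) \<Rightarrow> int ^ ('m::{finite,linorder}) \<Rightarrow> complex ^ 'n ^ 'n"
    and \<Phi> P :: "int ^ ('m::{finite,linorder}) \<Rightarrow> complex ^ 'n ^ 'n"
    and B :: "('m::{finite,linorder}) \<Rightarrow> complex ^ 'n ^ 'n"
  assumes T_nz: "T \<noteq> 0"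
    and compat: "\<And>t \<alpha> \<beta>. vle t0 t \<Longrightarrow>
                   A \<alpha> (t + e1 \<beta>) ** A \<beta> t = A \<beta> (t + e1 \<alpha>) ** A \<alpha> t"
    and A_inv: "\<And>t \<alpha>. vle t0 t \<Longrightarrow> invertible (A \<alpha> t)"
    and Phi: "is_transition A t0 \<Phi>"
    and P_per: "\<And>t \<alpha>. vle t0 t \<Longrightarrow> P (t + of_int (int (T $ \<alpha>)) *s e1 \<alpha>) = P t"
    and B_inv: "\<And>\<alpha>. invertible (B \<alpha>)"
    and B_comm: "\<And>\<alpha> \<beta>. B \<alpha> ** B \<beta> = B \<beta> ** B \<alpha>"
    and Floquet: "\<And>t. vle t0 t \<Longrightarrow> \<Phi> t = P t ** Bpow B t"
  shows "(\<forall>t. vle t0 t \<longrightarrow> invertible (P t))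
    \<and> (\<forall>y. is_solution t0 (\<lambda>\<alpha> t. B \<alpha>) y \<longrightarrow> is_solution t0 A (\<lambda>t. P t *v y t))
    \<and> (\<forall>x. is_solution t0 A x \<longrightarrow> is_solution t0 (\<lambda>\<alpha> t. B \<alpha>) (\<lambda>t. matrix_inv (P t) *v x t))"
proof -
  have Phi0: "\<Phi> t0 = mat 1" and PhiS: "\<And>t \<alpha>. vle t0 t \<Longrightarrow> \<Phi> (t + e1 \<alpha>) = A \<alpha> t ** \<Phi> t"
    using Phi by (auto simp: is_transition_def)
  have vle_step: "\<And>t \<alpha>. vle t0 t \<Longrightarrow> vle t0 (t + e1 \<alpha>)"
    unfolding vle_def by (simp add: e1_nth) (smt (verit))
  define d where "d t = (\<Sum>i\<in>UNIV. nat (t $ i - t0 $ i))" for t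
  have PhiInvK: "\<forall>t. vle t0 t \<longrightarrow> d t = k \<longrightarrow> invertible (\<Phi> t)" for k
  proof (induction k)
    case 0
    show ?case
    proof (intro allI impI)
      fix t assume v: "vle t0 t" and "d t = 0"
      hence "\<forall>i. nat (t $ i - t0 $ i) = 0" unfolding d_def by simp
      with v have "t = t0" by (auto simp: vle_def vec_eq_iff intro: antisym)
      thus "invertible (\<Phi> t)" using Phi0 mat1_invertible by simp
    qed
  next
    case (Suc k)
    show ?case
    proof (intro allI impI)
      fix t assume v: "vle t0 t" and dt: "d t = Suc k"
      have "\<exists>\<alpha>. t $ \<alpha> > t0 $ \<alpha>"
      proof (rule ccontr)
        assume "\<not> ?thesis"
        hence "\<forall>i. nat (t $ i - t0 $ i) = 0" by (simp add: not_less)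
        thus False using dt unfolding d_def by simp
      qed
      then obtain \<alpha> where a: "t $ \<alpha> > t0 $ \<alpha>" by blast
      define s where "s = t - e1 \<alpha>"
      have ts: "t = s + e1 \<alpha>" by (simp add: s_def)
      have vs: "vle t0 s" using v a by (auto simp: vle_def s_def e1_nth)
      have ds1: "d t = nat (t $ \<alpha> - t0 $ \<alpha>) + (\<Sum>i\<in>UNIV - {\<alpha>}. nat (t $ i - t0 $ i))"
        unfolding d_def by (simp add: sum.remove)
      have ds2: "d s = nat (s $ \<alpha> - t0 $ \<alpha>) + (\<Sum>i\<in>UNIV - {\<alpha>}. nat (s $ i - t0 $ i))"
        unfolding d_def by (simp add: sum.remove)
      have "(\<Sum>i\<in>UNIV - {\<alpha>}. nat (s $ i - t0 $ i)) = (\<Sum>i\<in>UNIV - {\<alpha>}. nat (t $ i - t0 $ i))"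
        by (rule sum.cong) (auto simp: s_def e1_nth)
      moreover have "nat (s $ \<alpha> - t0 $ \<alpha>) + 1 = nat (t $ \<alpha> - t0 $ \<alpha>)"
        using a by (simp add: s_def e1_nth)
      ultimately have "d s = k" using ds1 ds2 dt by simp
      with Suc.IH vs have "invertible (\<Phi> s)" by blast
      thus "invertible (\<Phi> t)" using ts PhiS[OF vs] A_inv[OF vs] invertible_mult by metis
    qed
  qed
  have PhiInv: "\<And>t. vle t0 t \<Longrightarrow> invertible (\<Phi> t)" using PhiInvK by blast
  have BI: "\<And>t. Bpow B t ** matrix_inv (Bpow B t) = mat 1"
    using minv(1)[OF Bpow_inv[of B, OF B_inv]] by blast
  have Peq: "\<And>t. vle t0 t \<Longrightarrow> P t = \<Phi> t ** matrix_inv (Bpow B t)"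
    using Floquet BI by (simp add: matrix_mul_assoc[symmetric] matrix_mul_rid)
  have Pinv: "\<And>t. vle t0 t \<Longrightarrow> invertible (P t)"
    using Peq PhiInv invertible_mult inv_invertible Bpow_inv[of B, OF B_inv] by metis
  have key: "\<And>t \<alpha>. vle t0 t \<Longrightarrow> P (t + e1 \<alpha>) ** B \<alpha> = A \<alpha> t ** P t"
  proof -
    fix t \<alpha> assume v: "vle t0 t"
    have "P (t + e1 \<alpha>) ** B \<alpha> ** Bpow B t = \<Phi> (t + e1 \<alpha>)"
      using Floquet[OF vle_step[OF v]] Bpow_step[of B, OF B_inv B_comm] by (simp add: matrix_mul_assoc)
    also have "\<dots> = A \<alpha> t ** P t ** Bpow B t"
      using PhiS[OF v] Floquet[OF v] by (simp add: matrix_mul_assoc)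
    finally have "P (t + e1 \<alpha>) ** B \<alpha> ** Bpow B t ** matrix_inv (Bpow B t)
        = A \<alpha> t ** P t ** Bpow B t ** matrix_inv (Bpow B t)" by simp
    thus "P (t + e1 \<alpha>) ** B \<alpha> = A \<alpha> t ** P t"
      using BI by (simp add: matrix_mul_assoc[symmetric] matrix_mul_rid)
  qed
  have key2: "\<And>t \<alpha>. vle t0 t \<Longrightarrow> B \<alpha> ** matrix_inv (P t) = matrix_inv (P (t + e1 \<alpha>)) ** A \<alpha> t"
  proof -
    fix t \<alpha> assume v: "vle t0 t"
    have i1: "matrix_inv (P (t + e1 \<alpha>)) ** P (t + e1 \<alpha>) = mat 1"
      using minv(2)[OF Pinv[OF vle_step[OF v]]] .
    have i2: "P t ** matrix_inv (P t) = mat 1" using minv(1)[OF Pinv[OF v]] .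
    have "B \<alpha> ** matrix_inv (P t) = matrix_inv (P (t + e1 \<alpha>)) ** (P (t + e1 \<alpha>) ** B \<alpha>) ** matrix_inv (P t)"
      using i1 by (simp add: matrix_mul_assoc matrix_mul_lid)
    also have "\<dots> = matrix_inv (P (t + e1 \<alpha>)) ** A \<alpha> t ** (P t ** matrix_inv (P t))"
      using key[OF v] by (simp add: matrix_mul_assoc)
    also have "\<dots> = matrix_inv (P (t + e1 \<alpha>)) ** A \<alpha> t" using i2 by (simp add: matrix_mul_rid)
    finally show "B \<alpha> ** matrix_inv (P t) = matrix_inv (P (t + e1 \<alpha>)) ** A \<alpha> t" .
  qed
  show ?thesis
  proof (intro conjI allI impI)
    fix t assume "vle t0 t" thus "invertible (P t)" by (rule Pinv)
  next
    fix y assume y: "is_solution t0 (\<lambda>\<alpha> t. B \<alpha>) y"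
    show "is_solution t0 A (\<lambda>t. P t *v y t)"
      unfolding is_solution_def
    proof (intro allI impI)
      fix t \<alpha> assume v: "vle t0 t"
      have "P (t + e1 \<alpha>) *v y (t + e1 \<alpha>) = P (t + e1 \<alpha>) *v (B \<alpha> *v y t)"
        using y v by (simp add: is_solution_def)
      also have "\<dots> = A \<alpha> t *v (P t *v y t)"
        by (simp add: matrix_vector_mul_assoc key[OF v])
      finally show "P (t + e1 \<alpha>) *v y (t + e1 \<alpha>) = A \<alpha> t *v (P t *v y t)" .
    qed
  next
    fix x assume x: "is_solution t0 A x"
    show "is_solution t0 (\<lambda>\<alpha> t. B \<alpha>) (\<lambda>t. matrix_inv (P t) *v x t)"
      unfolding is_solution_def
    proof (intro allI impI)
      fix t \<alpha> assume v: "vle t0 t"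
      have "matrix_inv (P (t + e1 \<alpha>)) *v x (t + e1 \<alpha>) = matrix_inv (P (t + e1 \<alpha>)) *v (A \<alpha> t *v x t)"
        using x v by (simp add: is_solution_def)
      also have "\<dots> = B \<alpha> *v (matrix_inv (P t) *v x t)"
        by (simp add: matrix_vector_mul_assoc key2[OF v])
      finally show "matrix_inv (P (t + e1 \<alpha>)) *v x (t + e1 \<alpha>) = B \<alpha> *v (matrix_inv (P t) *v x t)" .
    qed
  qed
qed

end
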